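(* Let $G$ be a connected directed multigraph on the vertex set $[n+1]$ with $m$ edges, each directed $i\to j$ with $i<j$, with at least one incoming edge at vertex $i$ for $i=2,\ldots,n+1$, and let ${\bf b}=(\sum_{i=1}^n b_i,-b_1,\ldots,-b_n)$ with $b_i\in\mathbb{Z}_{\ge0}$. Then \[ K_G({\bf b})=\sum_{{\bf j}}\binom{b_1+{\rm in}_2}{j_1}\cdots\binom{b_n+{\rm in}_{n+1}}{j_n}\cdot K_G(0,{\rm in}_2-j_1,{\rm in}_3-j_2,\ldots,{\rm in}_{n+1}-j_n), \] where ${\rm in}_i={\rm ind}_i-1$, ${\rm ind}_i$ is the indegree of vertex $i$, and the sum is over weak compositions ${\bf j}=(j_1,\ldots,j_n)$ of $m-n$ that are $\le({\rm in}_2,\ldots,{\rm in}_{n+1})$ in dominance order.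
   Context: $K_G({\bf v})$ (Kostant partition function), for ${\bf v}\in\mathbb{Z}^{n+1}$, is the number of $f\in\mathbb{Z}_{\ge0}^{E(G)}$ with outflow minus inflow at each vertex $k$ equal to $v_k$. For weak compositions ${\bf j},{\bf k}$ of the same integer, ${\bf j}\le{\bf k}$ in dominance order means $j_1+\cdots+j_l\le k_1+\cdots+k_l$ for all $l$. *)

theory Defs
  imports Main
begin

text \<open>A directed multigraph on vertex set [n+1] = {1..n+1} is a list of edges (i, j),
  each meaning an edge i -> j; repeated pairs give multiple edges.
  Edge e is the e-th list entry, e < length G.\<close>

type_synonym mgraph = "(nat \<times> nat) list"

definition netflow :: "mgraph \<Rightarrow> (nat \<Rightarrow> nat) \<Rightarrow> nat \<Rightarrow> int" where
  "netflow G f k =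
     (\<Sum>e\<in>{e. e < length G \<and> fst (G ! e) = k}. int (f e))
   - (\<Sum>e\<in>{e. e < length G \<and> snd (G ! e) = k}. int (f e))"

definition kostant :: "nat \<Rightarrow> mgraph \<Rightarrow> (nat \<Rightarrow> int) \<Rightarrow> nat" where
  "kostant n G v = card {f :: nat \<Rightarrow> nat. (\<forall>e. length G \<le> e \<longrightarrow> f e = 0) \<and>
                          (\<forall>k\<in>{1..n+1}. netflow G f k = v k)}"

definition indeg :: "mgraph \<Rightarrow> nat \<Rightarrow> nat" where
  "indeg G i = length (filter (\<lambda>e. snd e = i) G)"

definition connected_mgraph :: "nat \<Rightarrow> mgraph \<Rightarrow> bool" where
  "connected_mgraph n G \<longleftrightarrow>
     (\<forall>u\<in>{1..n+1}. \<forall>w\<in>{1..n+1}.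
        (\<lambda>x y. (x, y) \<in> set G \<or> (y, x) \<in> set G)\<^sup>*\<^sup>* u w)"

definition dom_below :: "nat \<Rightarrow> nat \<Rightarrow> (nat \<Rightarrow> nat) \<Rightarrow> (nat \<Rightarrow> nat) set" where
  "dom_below n s c = {j. (\<forall>i. i \<notin> {1..n} \<longrightarrow> j i = 0) \<and> (\<Sum>i=1..n. j i) = s \<and>
                         (\<forall>l\<in>{1..n}. (\<Sum>i=1..l. j i) \<le> (\<Sum>i=1..l. c i))}"

end

theory Submission
  imports Defs
begin


definition okg :: "nat \<Rightarrow> mgraph \<Rightarrow> bool" where
  "okg n G \<longleftrightarrow> (\<forall>e<length G. 1 \<le> fst (G!e) \<and> fst (G!e) < snd (G!e) \<and> snd (G!e) \<le> Suc n)"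

definition flows :: "nat \<Rightarrow> mgraph \<Rightarrow> (nat \<Rightarrow> int) \<Rightarrow> (nat \<Rightarrow> nat) set" where
  "flows n G v = {f. (\<forall>e. length G \<le> e \<longrightarrow> f e = 0) \<and> (\<forall>k\<in>{1..n+1}. netflow G f k = v k)}"

lemma kostant_flows: "kostant n G v = card (flows n G v)"
  by (simp add: kostant_def flows_def)

lemma sum_filt: "(\<Sum>e\<in>{e. e < (m::nat) \<and> P e}. h e) = (\<Sum>e<m. if P e then h e else (0::int))"
proof -
  have "{e. e < m \<and> P e} = {e \<in> {..<m}. P e}" by auto
  then show ?thesis using sum.inter_filter[of "{..<m}" h P] by simp
qed

lemma netflow_sum: "netflow G f k = (\<Sum>e<length G. int (f e) *
   ((if fst (G!e) = k then 1 else 0) - (if snd (G!e) = k then 1 else 0)))"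
  unfolding netflow_def sum_filt sum_subtractf[symmetric]
  by (rule sum.cong) auto

lemma weighted:
  assumes "okg n G"
  shows "(\<Sum>k\<in>{1..Suc n}. w k * netflow G f k) =
    (\<Sum>e<length G. int (f e) * (w (fst (G!e)) - w (snd (G!e))))"
proof -
  have "(\<Sum>k\<in>{1..Suc n}. w k * netflow G f k) =
     (\<Sum>e<length G. \<Sum>k\<in>{1..Suc n}. w k * (int (f e) *
   ((if fst (G!e) = k then 1 else 0) - (if snd (G!e) = k then 1 else 0))))"
    unfolding netflow_sum sum_distrib_left by (rule sum.swap)
  also have "\<dots> = (\<Sum>e<length G. int (f e) * (w (fst (G!e)) - w (snd (G!e))))"
  proof (rule sum.cong[OF refl])
    fix e assume "e \<in> {..<length G}"
    then have r: "fst (G!e) \<in> {1..Suc n}" "snd (G!e) \<in> {1..Suc n}"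
      using assms unfolding okg_def by auto
    have "(\<Sum>k\<in>{1..Suc n}. w k * (int (f e) *
   ((if fst (G!e) = k then 1 else 0) - (if snd (G!e) = k then 1 else 0)))) =
      int (f e) * ((\<Sum>k\<in>{1..Suc n}. if fst (G!e) = k then w k else 0)
        - (\<Sum>k\<in>{1..Suc n}. if snd (G!e) = k then w k else 0))"
      unfolding sum_subtractf[symmetric] sum_distrib_left
      by (rule sum.cong) (auto simp: algebra_simps)
    also have "\<dots> = int (f e) * (w (fst (G!e)) - w (snd (G!e)))"
      using r by (simp add: sum.delta)
    finally show "(\<Sum>k\<in>{1..Suc n}. w k * (int (f e) *
   ((if fst (G!e) = k then 1 else 0) - (if snd (G!e) = k then 1 else 0)))) =
      int (f e) * (w (fst (G!e)) - w (snd (G!e)))" .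
  qed
  finally show ?thesis .
qed


lemma flows_finite:
  assumes "okg n G"
  shows "finite (flows n G v)"
proof -
  define Q where "Q = (\<Sum>k\<in>{1..Suc n}. int k * v k)"
  have bnd: "f e \<le> nat (- Q)" if f: "f \<in> flows n G v" and e: "e < length G" for f e
  proof -
    have "(\<Sum>e<length G. int (f e) * (int (fst (G!e)) - int (snd (G!e)))) = Q"
      unfolding Q_def using weighted[OF assms, of int f] f by (simp add: flows_def)
    moreover have "(\<Sum>e<length G. int (f e)) \<le> (\<Sum>e<length G. - (int (f e) * (int (fst (G!e)) - int (snd (G!e)))))"
    proof (rule sum_mono)
      fix e assume "e \<in> {..<length G}"
      then have "int (snd (G!e)) - int (fst (G!e)) \<ge> 1" using assms unfolding okg_def by force
      then have "int (f e) * 1 \<le> int (f e) * (int (snd (G!e)) - int (fst (G!e)))"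
        by (intro mult_left_mono) auto
      then show "int (f e) \<le> - (int (f e) * (int (fst (G!e)) - int (snd (G!e))))"
        by (simp add: algebra_simps)
    qed
    moreover have "int (f e) \<le> (\<Sum>e<length G. int (f e))"
      using e by (intro member_le_sum) auto
    ultimately have "int (f e) \<le> - Q" by (simp add: sum_negf)
    then show ?thesis by simp
  qed
  have "flows n G v \<subseteq> {f. \<forall>x. (x \<in> {..<length G} \<longrightarrow> f x \<in> {..nat (-Q)}) \<and> (x \<notin> {..<length G} \<longrightarrow> f x = 0)}"
    using bnd by (auto simp: flows_def)
  moreover have "finite {f. \<forall>x. (x \<in> {..<length G} \<longrightarrow> f x \<in> {..nat (-Q)}) \<and> (x \<notin> {..<length G} \<longrightarrow> f x = (0::nat))}"
    by (rule finite_set_of_finite_funs) auto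
  ultimately show ?thesis by (rule finite_subset)
qed

lemma segment_nonneg:
  assumes "okg n G" "L \<le> Suc n"
  shows "(\<Sum>k\<in>{1..L}. netflow G f k) \<ge> 0"
proof -
  have "(\<Sum>k\<in>{1..Suc n}. (if k \<le> L then 1 else 0) * netflow G f k) = (\<Sum>k\<in>{1..L}. netflow G f k)"
    using assms(2) by (intro sum.mono_neutral_cong_right) auto
  moreover have "(\<Sum>e<length G. int (f e) * ((if fst (G!e) \<le> L then 1 else 0) - (if snd (G!e) \<le> L then 1 else 0))) \<ge> 0"
  proof (rule sum_nonneg)
    fix e assume "e \<in> {..<length G}"
    then have "fst (G!e) < snd (G!e)" using assms unfolding okg_def by auto
    then show "int (f e) * ((if fst (G!e) \<le> L then 1 else 0) - (if snd (G!e) \<le> L then 1 else 0)) \<ge> 0"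
      by auto
  qed
  ultimately show ?thesis using weighted[OF assms(1), of "\<lambda>k. if k \<le> L then 1 else 0" f] by simp
qed

lemma kostant_zero_seg:
  assumes "okg n G" "L \<le> Suc n" "(\<Sum>k\<in>{1..L}. v k) < 0"
  shows "kostant n G v = 0"
proof -
  have "flows n G v = {}"
  proof (rule ccontr)
    assume "flows n G v \<noteq> {}"
    then obtain f where f: "f \<in> flows n G v" by auto
    then have "(\<Sum>k\<in>{1..L}. netflow G f k) = (\<Sum>k\<in>{1..L}. v k)"
      using assms(2) by (intro sum.cong) (auto simp: flows_def)
    then show False using segment_nonneg[OF assms(1,2), of f] assms(3) by simp
  qed
  then show ?thesis by (simp add: kostant_flows)
qed

lemma netflow_last:
  assumes "okg n G"
  shows "netflow G f (Suc n) = - (\<Sum>e\<in>{e. e < length G \<and> snd (G!e) = Suc n}. int (f e))"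
proof -
  have e1: "{e. e < length G \<and> fst (G!e) = Suc n} = {}" using assms unfolding okg_def by fastforce
  show ?thesis unfolding netflow_def e1 by simp
qed

lemma flow_le_last:
  assumes "okg n G" "p < length G" "snd (G!p) = Suc n"
  shows "int (f p) \<le> - netflow G f (Suc n)"
  unfolding netflow_last[OF assms(1)] using assms(2,3)
  by (simp, intro member_le_sum) auto

lemma kostant_last_pos:
  assumes "okg n G" "v (Suc n) > 0"
  shows "kostant n G v = 0"
proof -
  have "flows n G v = {}"
  proof (rule ccontr)
    assume "flows n G v \<noteq> {}"
    then obtain f where f: "f \<in> flows n G v" by auto
    then have "netflow G f (Suc n) = v (Suc n)" by (auto simp: flows_def)
    moreover have "netflow G f (Suc n) \<le> 0" unfolding netflow_last[OF assms(1)]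
      by (simp add: sum_nonneg)
    ultimately show False using assms(2) by simp
  qed
  then show ?thesis by (simp add: kostant_flows)
qed

lemma kostant_cong:
  assumes "\<And>k. k \<in> {1..Suc n} \<Longrightarrow> v k = v' k"
  shows "kostant n G v = kostant n G v'"
proof -
  have "flows n G v = flows n G v'" using assms by (auto simp: flows_def)
  then show ?thesis by (simp add: kostant_flows)
qed

lemma kostant_drop_vertex:
  assumes "okg n G"
  shows "kostant (Suc n) G v = (if v (Suc (Suc n)) = 0 then kostant n G v else 0)"
proof -
  have z: "netflow G f (Suc (Suc n)) = 0" for f
  proof -
    have e1: "{e. e < length G \<and> fst (G!e) = Suc (Suc n)} = {}" and e2: "{e. e < length G \<and> snd (G!e) = Suc (Suc n)} = {}"
      using assms unfolding okg_def by fastforce+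
    show ?thesis unfolding netflow_def e1 e2 by simp
  qed
  have s: "(\<forall>k\<in>{1..Suc n + 1}. P k) = (P (Suc (Suc n)) \<and> (\<forall>k\<in>{1..n+1}. P k))" for P
    by (auto simp: le_Suc_eq Ball_def)
  have "flows (Suc n) G v = (if v (Suc (Suc n)) = 0 then flows n G v else {})"
    unfolding flows_def s using z by auto
  then show ?thesis by (simp add: kostant_flows)
qed


definition del :: "nat \<Rightarrow> mgraph \<Rightarrow> mgraph" where
  "del p G = take p G @ drop (Suc p) G"

lemma del_len: "p < length G \<Longrightarrow> length (del p G) = length G - 1"
  by (simp add: del_def)

lemma del_nth: "p < length G \<Longrightarrow> e < length G - 1 \<Longrightarrow> del p G ! e = G ! (if e < p then e else Suc e)"
  by (auto simp: del_def nth_append min_def)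

lemma sum_del:
  assumes "p < (m::nat)"
  shows "(\<Sum>e<m. F e) = F p + (\<Sum>e<m-1. F (if e < p then e else Suc e))"
proof -
  have "(\<Sum>e<m. F e) = F p + (\<Sum>e\<in>{..<m}-{p}. F e)"
    using assms by (simp add: sum.remove)
  also have "(\<Sum>e\<in>{..<m}-{p}. F e) = (\<Sum>e<m-1. F (if e < p then e else Suc e))"
    by (rule sum.reindex_bij_witness[where i = "\<lambda>e. if e < p then e else Suc e"
          and j = "\<lambda>e. if e < p then e else e - 1"]) (use assms in auto)
  finally show ?thesis .
qed

lemma okg_del: "okg n G \<Longrightarrow> p < length G \<Longrightarrow> okg n (del p G)"
  unfolding okg_def by (simp add: del_len del_nth)

lemma indeg_del:
  assumes "p < length G"
  shows "indeg (del p G) k = indeg G k - (if snd (G!p) = k then 1 else 0)"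
proof -
  have G: "G = take p G @ G!p # drop (Suc p) G" using assms by (simp add: id_take_nth_drop)
  have "indeg G k = length (filter (\<lambda>e. snd e = k) (take p G)) + (if snd (G!p) = k then 1 else 0)
     + length (filter (\<lambda>e. snd e = k) (drop (Suc p) G))"
    unfolding indeg_def by (subst G) simp
  then show ?thesis unfolding indeg_def del_def by simp
qed

lemma netflow_del:
  assumes "p < length G" "G!p = (s,t)" "\<forall>e. length G \<le> e \<longrightarrow> f e = 0"
  shows "netflow G f k = netflow (del p G) (\<lambda>e. if e < p then f e else f (Suc e)) k
     + (if s = k then int (f p) else 0) - (if t = k then int (f p) else 0)"
proof -
  have *: "(\<Sum>e<length G - 1. int (if e < p then f e else f (Suc e)) *
   ((if fst (del p G!e) = k then 1 else 0) - (if snd (del p G!e) = k then 1 else 0)))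
   = (\<Sum>e<length G - 1. (\<lambda>e. int (f e) *
   ((if fst (G!e) = k then 1 else 0) - (if snd (G!e) = k then 1 else 0))) (if e < p then e else Suc e))"
    by (rule sum.cong) (auto simp: del_nth assms(1))
  show ?thesis
    unfolding netflow_sum del_len[OF assms(1)] *
    by (subst sum_del[OF assms(1)]) (simp add: assms(2))
qed

lemma kostant_del:
  assumes "okg n G" "p < length G" "G!p = (s,t)" "finite X"
    "\<And>f. f \<in> flows n G v \<Longrightarrow> f p \<in> X"
  shows "kostant n G v = (\<Sum>x\<in>X. kostant n (del p G)
           (\<lambda>k. v k - (if k = s then int x else 0) + (if k = t then int x else 0)))"
proof -
  define G0 where "G0 = del p G"
  define vx where "vx x = (\<lambda>k. v k - (if k = s then int x else 0) + (if k = t then int x else 0))" for x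
  define ins where "ins x g = (\<lambda>e. if e < p then g e else if e = p then x else g (e - 1))" for x and g :: "nat \<Rightarrow> nat"
  define rs where "rs f = (\<lambda>e. if e < p then f e else f (Suc e))" for f :: "nat \<Rightarrow> nat"
  have len: "length G0 = length G - 1" unfolding G0_def using del_len[OF assms(2)] .
  have rs_ins: "rs (ins x g) = g" for x g unfolding rs_def ins_def by auto
  have ins_p: "ins x g p = x" for x g unfolding ins_def by auto
  have eq: "flows n G v = (\<Union>x\<in>X. ins x ` flows n G0 (vx x))"
  proof
    show "flows n G v \<subseteq> (\<Union>x\<in>X. ins x ` flows n G0 (vx x))"
    proof
      fix f assume f: "f \<in> flows n G v"
      have z: "\<forall>e. length G \<le> e \<longrightarrow> f e = 0" using f by (simp add: flows_def)
      have "rs f \<in> flows n G0 (vx (f p))"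
        unfolding flows_def
      proof (intro CollectI conjI allI impI ballI)
        fix e assume "length G0 \<le> e" then show "rs f e = 0" using z len assms(2) by (auto simp: rs_def)
      next
        fix k assume k: "k \<in> {1..n+1}"
        show "netflow G0 (rs f) k = vx (f p) k"
          using netflow_del[OF assms(2,3) z, of k] f k unfolding G0_def rs_def vx_def flows_def by auto
      qed
      moreover have "f = ins (f p) (rs f)" unfolding ins_def rs_def by (rule ext) auto
      ultimately show "f \<in> (\<Union>x\<in>X. ins x ` flows n G0 (vx x))" using assms(5)[OF f] by blast
    qed
  next
    show "(\<Union>x\<in>X. ins x ` flows n G0 (vx x)) \<subseteq> flows n G v"
    proof clarify
      fix x g assume x: "x \<in> X" and g: "g \<in> flows n G0 (vx x)"
      have z: "\<forall>e. length G \<le> e \<longrightarrow> ins x g e = 0"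
        using g len assms(2) by (auto simp: ins_def flows_def)
      show "ins x g \<in> flows n G v"
        unfolding flows_def
      proof (intro CollectI conjI ballI)
        show "\<forall>e. length G \<le> e \<longrightarrow> ins x g e = 0" by (rule z)
      next
        fix k assume k: "k \<in> {1..n+1}"
        show "netflow G (ins x g) k = v k"
          using netflow_del[OF assms(2,3) z, of k] g k unfolding rs_ins[unfolded rs_def] ins_p
          unfolding G0_def vx_def flows_def by auto
      qed
    qed
  qed
  have fin: "finite (flows n G0 (vx x))" for x
    unfolding G0_def by (rule flows_finite[OF okg_del[OF assms(1,2)]])
  have "card (flows n G v) = (\<Sum>x\<in>X. card (ins x ` flows n G0 (vx x)))"
    unfolding eq
  proof (rule card_UN_disjoint[OF assms(4)])
    show "\<forall>x\<in>X. finite (ins x ` flows n G0 (vx x))" using fin by auto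
    show "\<forall>x\<in>X. \<forall>y\<in>X. x \<noteq> y \<longrightarrow> ins x ` flows n G0 (vx x) \<inter> ins y ` flows n G0 (vx y) = {}"
      using ins_p by (auto dest: fun_cong[where x = p])
  qed
  also have "\<dots> = (\<Sum>x\<in>X. card (flows n G0 (vx x)))"
  proof (rule sum.cong[OF refl])
    fix x
    have "inj (ins x)" by (metis injI rs_ins)
    then show "card (ins x ` flows n G0 (vx x)) = card (flows n G0 (vx x))"
      by (simp add: card_image inj_on_subset)
  qed
  finally show ?thesis unfolding kostant_flows G0_def vx_def .
qed



lemma choose_U: "(\<Sum>x\<le>N. (x choose y) * ((N - x) choose q)) = Suc N choose (y + q + 1)"
proof (induction N arbitrary: q)
  case 0
  then show ?case by (cases y; cases q) auto
next
  case (Suc N)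
  show ?case
  proof (cases q)
    case 0
    then show ?thesis using sum_choose_upper[where n="Suc N" and m=y] by simp
  next
    case (Suc q')
    have "(\<Sum>x\<le>Suc N. (x choose y) * ((Suc N - x) choose q)) =
          (\<Sum>x\<le>N. (x choose y) * ((Suc N - x) choose q))"
      using Suc by simp
    also have "\<dots> = (\<Sum>x\<le>N. (x choose y) * ((N - x) choose q')) + (\<Sum>x\<le>N. (x choose y) * ((N - x) choose q))"
      unfolding sum.distrib[symmetric]
      by (rule sum.cong) (auto simp: Suc Suc_diff_le algebra_simps)
    also have "\<dots> = (Suc N choose (y + q' + 1)) + (Suc N choose (y + q + 1))"
      using Suc.IH by simp
    also have "\<dots> = Suc (Suc N) choose (y + q + 1)"
      using Suc by simp
    finally show ?thesis .
  qed
qed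

lemma choose_I1:
  assumes "D \<le> (q::nat)"
  shows "(\<Sum>x\<le>B. ((A + x) choose p) * ((B - x + D) choose q))
       = (\<Sum>y\<le>p. (A choose (p - y)) * ((B + D + 1) choose (q + y + 1)))"
proof -
  have "(\<Sum>x\<le>B. ((A + x) choose p) * ((B - x + D) choose q))
      = (\<Sum>x\<le>B. \<Sum>y\<le>p. (A choose (p - y)) * ((x choose y) * ((B + D - x) choose q)))"
  proof (rule sum.cong[OF refl])
    fix x assume "x \<in> {..B}"
    then have e: "B - x + D = B + D - x" by auto
    show "((A + x) choose p) * ((B - x + D) choose q) = (\<Sum>y\<le>p. (A choose (p - y)) * ((x choose y) * ((B + D - x) choose q)))"
      unfolding e add.commute[of A x] vandermonde[where m=x and n=A and r=p, symmetric] sum_distrib_right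
      by (rule sum.cong) (auto simp: algebra_simps)
  qed
  also have "\<dots> = (\<Sum>y\<le>p. (A choose (p - y)) * (\<Sum>x\<le>B. (x choose y) * ((B + D - x) choose q)))"
    by (subst sum.swap) (simp add: sum_distrib_left)
  also have "\<dots> = (\<Sum>y\<le>p. (A choose (p - y)) * ((B + D + 1) choose (q + y + 1)))"
  proof (rule sum.cong[OF refl])
    fix y
    have "(\<Sum>x\<le>B. (x choose y) * ((B + D - x) choose q)) = (\<Sum>x\<le>B + D. (x choose y) * ((B + D - x) choose q))"
      by (rule sum.mono_neutral_left) (use assms in auto)
    also have "\<dots> = (B + D + 1) choose (q + y + 1)"
      using choose_U[where N="B + D" and y=y and q=q] by (simp add: add.commute add.left_commute)
    finally show "(A choose (p - y)) * (\<Sum>x\<le>B. (x choose y) * ((B + D - x) choose q)) =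
         (A choose (p - y)) * ((B + D + 1) choose (q + y + 1))" by simp
  qed
  finally show ?thesis .
qed

lemma choose_V: "((A + B) choose p) = (\<Sum>y\<le>p. (A choose (p - y)) * (B choose y))"
  using vandermonde[where m=B and n=A and r=p] by (simp add: add.commute mult.commute)

lemma sum_upd: "finite A \<Longrightarrow> i \<in> A \<Longrightarrow> sum (f(i := u)) A + f i = sum f A + (u::nat)"
  by (simp add: sum.remove)



definition CC :: "mgraph \<Rightarrow> nat \<Rightarrow> nat" where "CC G i = indeg G (Suc i) - 1"
definition W0 :: "nat \<Rightarrow> nat \<Rightarrow> (nat \<Rightarrow> nat) set" where
  "W0 n S = {j. (\<forall>i>n. j i = 0) \<and> (\<Sum>i\<le>n. j i) = S}"
definition Pf :: "nat \<Rightarrow> mgraph \<Rightarrow> (nat \<Rightarrow> nat) \<Rightarrow> (nat \<Rightarrow> nat) \<Rightarrow> nat" where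
  "Pf n G b j = (\<Prod>i\<in>{1..n}. (b i + CC G i) choose j i)"
definition Tf :: "nat \<Rightarrow> mgraph \<Rightarrow> (nat \<Rightarrow> nat) \<Rightarrow> nat" where
  "Tf n G j = kostant n G (\<lambda>k. int (indeg G k - 1) - int (j (k - 1)))"
definition LV :: "nat \<Rightarrow> (nat \<Rightarrow> nat) \<Rightarrow> nat \<Rightarrow> int" where
  "LV n b = (\<lambda>k. if k = 1 then int (\<Sum>i\<in>{1..n}. b i) else - int (b (k - 1)))"

lemma W0_finite: "finite (W0 n S)"
proof -
  have "W0 n S \<subseteq> {f. \<forall>x. (x \<in> {..n} \<longrightarrow> f x \<in> {..S}) \<and> (x \<notin> {..n} \<longrightarrow> f x = 0)}"
  proof clarify
    fix j x assume j: "j \<in> W0 n S"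
    show "(x \<in> {..n} \<longrightarrow> j x \<in> {..S}) \<and> (x \<notin> {..n} \<longrightarrow> j x = 0)"
    proof (intro conjI impI)
      assume "x \<in> {..n}"
      then have "j x \<le> (\<Sum>i\<le>n. j i)" by (intro member_le_sum) auto
      then show "j x \<in> {..S}" using j by (simp add: W0_def)
    next
      assume "x \<notin> {..n}" then show "j x = 0" using j by (simp add: W0_def)
    qed
  qed
  moreover have "finite {f. \<forall>x. (x \<in> {..n} \<longrightarrow> f x \<in> {..S}) \<and> (x \<notin> {..n} \<longrightarrow> f x = (0::nat))}"
    by (rule finite_set_of_finite_funs) auto
  ultimately show ?thesis by (rule finite_subset)
qed

lemma indeg_card: "indeg G k = card {e. e < length G \<and> snd (G!e) = k}"
  unfolding indeg_def by (simp add: length_filter_conv_card)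

lemma indeg_0_iff: "indeg G k = 0 \<longleftrightarrow> (\<forall>e<length G. snd (G!e) \<noteq> k)"
  unfolding indeg_card by auto

lemma indeg_1: "okg n G \<Longrightarrow> indeg G 1 = 0"
  unfolding indeg_0_iff okg_def by fastforce

lemma indeg_pos: "1 \<le> indeg G k \<Longrightarrow> \<exists>p<length G. snd (G!p) = k"
  using indeg_0_iff[of G k] by auto

lemma indeg_sum_le: "finite K \<Longrightarrow> (\<Sum>k\<in>K. indeg G k) \<le> length G"
proof (induction G)
  case Nil then show ?case by (simp add: indeg_def)
next
  case (Cons e G)
  have "(\<Sum>k\<in>K. indeg (e # G) k) = (\<Sum>k\<in>K. indeg G k) + (\<Sum>k\<in>K. if snd e = k then 1 else 0)"
    unfolding sum.distrib[symmetric] by (rule sum.cong) (auto simp: indeg_def)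
  also have "(\<Sum>k\<in>K. if snd e = k then 1 else 0) \<le> (1::nat)"
    using Cons.prems by (simp add: sum.delta)
  finally show ?case using Cons by simp
qed

lemma Tf_zero0: "okg n G \<Longrightarrow> 0 < j 0 \<Longrightarrow> Tf n G j = 0"
  unfolding Tf_def by (rule kostant_zero_seg[where L = 1]) (auto simp: indeg_1[simplified])

lemma Tf_zeroN: "okg n G \<Longrightarrow> j n < CC G n \<Longrightarrow> Tf n G j = 0"
  unfolding Tf_def CC_def by (rule kostant_last_pos) auto

lemma prod_split2:
  assumes "a < (N::nat)"
  shows "(\<Prod>i\<le>N. h i) = h a * h N * (\<Prod>i\<in>{..N}-{a,N}. (h i::nat))"
proof -
  have "(\<Prod>i\<le>N. h i) = h N * (\<Prod>i\<in>{..N}-{N}. h i)" by (simp add: prod.remove)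
  also have "(\<Prod>i\<in>{..N}-{N}. h i) = h a * (\<Prod>i\<in>{..N}-{N}-{a}. h i)"
    using assms by (intro prod.remove) auto
  also have "{..N}-{N}-{a} = {..N}-{a,N}" by auto
  finally show ?thesis by simp
qed

lemma prod_0: "h 0 = (1::nat) \<Longrightarrow> prod h {1..(N::nat)} = prod h {..N}"
proof -
  assume j: "h 0 = 1"
  have "{..N} = insert 0 {1..N}" by (rule set_eqI, simp, arith)
  then show ?thesis using j by simp
qed

lemma sum_upd2:
  assumes "a < (N::nat)"
  shows "(\<Sum>i\<le>N. (J(a := u, N := w)) i) + J a + J N = (\<Sum>i\<le>N. J i) + u + (w::nat)"
proof -
  have 1: "sum (J(a := u, N := w)) {..N} + (J(a := u)) N = sum (J(a:=u)) {..N} + w"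
    by (rule sum_upd) auto
  have 2: "sum (J(a := u)) {..N} + J a = sum J {..N} + u"
    by (rule sum_upd) (use assms in auto)
  show ?thesis using 1 2 assms by simp
qed

lemma ident1:
  fixes b c j :: "nat \<Rightarrow> nat"
  assumes a: "a < N" and j0: "j 0 = 0" and c1: "1 \<le> c N" and q: "c N - 1 \<le> j N"
  shows "(\<Sum>x\<le>b N. \<Prod>i\<in>{1..N}. ((b(N := b N - x, a := b a + x)) i + (c(N := c N - 1)) i) choose j i)
      = (\<Sum>y\<le>j a. \<Prod>i\<in>{1..N}. (b i + c i) choose ((j(a := j a - y, N := j N + Suc y)) i))"
proof -
  define R where "R = (\<Prod>i\<in>{..N}-{a,N}. (b i + c i) choose j i)"
  have L: "(\<Prod>i\<in>{1..N}. ((b(N := b N - x, a := b a + x)) i + (c(N := c N - 1)) i) choose j i)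
     = (((b a + c a) + x) choose j a) * ((b N - x + (c N - 1)) choose j N) * R" for x
  proof -
    have "(\<Prod>i\<in>{1..N}. ((b(N := b N - x, a := b a + x)) i + (c(N := c N - 1)) i) choose j i)
      = (\<Prod>i\<le>N. ((b(N := b N - x, a := b a + x)) i + (c(N := c N - 1)) i) choose j i)"
      by (rule prod_0) (simp add: j0)
    also have "\<dots> = (((b a + c a) + x) choose j a) * ((b N - x + (c N - 1)) choose j N) *
        (\<Prod>i\<in>{..N}-{a,N}. ((b(N := b N - x, a := b a + x)) i + (c(N := c N - 1)) i) choose j i)"
      using a by (subst prod_split2[OF a]) (simp add: algebra_simps)
    also have "(\<Prod>i\<in>{..N}-{a,N}. ((b(N := b N - x, a := b a + x)) i + (c(N := c N - 1)) i) choose j i) = R"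
      unfolding R_def by (rule prod.cong) auto
    finally show ?thesis .
  qed
  have Rr: "(\<Prod>i\<in>{1..N}. (b i + c i) choose ((j(a := j a - y, N := j N + Suc y)) i))
     = ((b a + c a) choose (j a - y)) * ((b N + c N) choose (j N + Suc y)) * R" if y: "y \<le> j a" for y
  proof -
    have z: "(j(a := j a - y, N := j N + Suc y)) 0 = 0" using j0 y a by (cases a) auto
    have "(\<Prod>i\<in>{1..N}. (b i + c i) choose ((j(a := j a - y, N := j N + Suc y)) i))
      = (\<Prod>i\<le>N. (b i + c i) choose ((j(a := j a - y, N := j N + Suc y)) i))"
      by (rule prod_0) (use j0 y a in auto)
    also have "\<dots> = ((b a + c a) choose (j a - y)) * ((b N + c N) choose (j N + Suc y)) *
        (\<Prod>i\<in>{..N}-{a,N}. (b i + c i) choose ((j(a := j a - y, N := j N + Suc y)) i))"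
      using a by (subst prod_split2[OF a]) simp
    also have "(\<Prod>i\<in>{..N}-{a,N}. (b i + c i) choose ((j(a := j a - y, N := j N + Suc y)) i)) = R"
      unfolding R_def by (rule prod.cong) auto
    finally show ?thesis .
  qed
  have "(\<Sum>x\<le>b N. \<Prod>i\<in>{1..N}. ((b(N := b N - x, a := b a + x)) i + (c(N := c N - 1)) i) choose j i)
     = (\<Sum>x\<le>b N. (((b a + c a) + x) choose j a) * ((b N - x + (c N - 1)) choose j N)) * R"
    unfolding L sum_distrib_right ..
  also have "(\<Sum>x\<le>b N. (((b a + c a) + x) choose j a) * ((b N - x + (c N - 1)) choose j N))
     = (\<Sum>y\<le>j a. ((b a + c a) choose (j a - y)) * ((b N + (c N - 1) + 1) choose (j N + y + 1)))"
    by (rule choose_I1[OF q])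
  also have "\<dots> * R = (\<Sum>y\<le>j a. \<Prod>i\<in>{1..N}. (b i + c i) choose ((j(a := j a - y, N := j N + Suc y)) i))"
    unfolding sum_distrib_right
  proof (rule sum.cong[OF refl])
    fix y assume "y \<in> {..j a}"
    then have y: "y \<le> j a" by simp
    show "((b a + c a) choose (j a - y)) * ((b N + (c N - 1) + 1) choose (j N + y + 1)) * R =
      (\<Prod>i\<in>{1..N}. (b i + c i) choose ((j(a := j a - y, N := j N + Suc y)) i))"
      unfolding Rr[OF y] using c1 by simp
  qed
  finally show ?thesis .
qed

lemma ident2:
  fixes b c j :: "nat \<Rightarrow> nat"
  assumes a: "a < Suc N" and j0: "j 0 = 0" and c0: "c (Suc N) = 0"
  shows "(\<Prod>i\<in>{1..N}. ((b(a := b a + b (Suc N))) i + c i) choose j i)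
      = (\<Sum>y\<le>j a. \<Prod>i\<in>{1..Suc N}. (b i + c i) choose ((j(a := j a - y, Suc N := y)) i))"
proof -
  define R where "R = (\<Prod>i\<in>{..N}-{a}. (b i + c i) choose j i)"
  have aN: "a \<le> N" using a by simp
  have "(\<Prod>i\<in>{1..N}. ((b(a := b a + b (Suc N))) i + c i) choose j i)
      = (\<Prod>i\<le>N. ((b(a := b a + b (Suc N))) i + c i) choose j i)"
    by (rule prod_0) (simp add: j0)
  also have "\<dots> = ((b a + c a + b (Suc N)) choose j a) * (\<Prod>i\<in>{..N}-{a}. ((b(a := b a + b (Suc N))) i + c i) choose j i)"
    using aN by (subst prod.remove[of _ a]) (auto simp: algebra_simps)
  also have "(\<Prod>i\<in>{..N}-{a}. ((b(a := b a + b (Suc N))) i + c i) choose j i) = R"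
    unfolding R_def by (rule prod.cong) auto
  also have "(b a + c a + b (Suc N)) choose j a = (\<Sum>y\<le>j a. ((b a + c a) choose (j a - y)) * (b (Suc N) choose y))"
    by (rule choose_V)
  also have "(\<Sum>y\<le>j a. ((b a + c a) choose (j a - y)) * (b (Suc N) choose y)) * R
     = (\<Sum>y\<le>j a. \<Prod>i\<in>{1..Suc N}. (b i + c i) choose ((j(a := j a - y, Suc N := y)) i))"
    unfolding sum_distrib_right
  proof (rule sum.cong[OF refl])
    fix y assume y: "y \<in> {..j a}"
    have z: "(j(a := j a - y, Suc N := y)) 0 = 0" using j0 y a by (cases a) auto
    have "(\<Prod>i\<in>{1..Suc N}. (b i + c i) choose ((j(a := j a - y, Suc N := y)) i))
       = (\<Prod>i\<le>Suc N. (b i + c i) choose ((j(a := j a - y, Suc N := y)) i))"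
      by (rule prod_0) (use j0 y a in auto)
    also have "\<dots> = (\<Prod>i\<le>N. (b i + c i) choose ((j(a := j a - y, Suc N := y)) i)) * (b (Suc N) choose y)"
      using c0 by simp
    also have "(\<Prod>i\<le>N. (b i + c i) choose ((j(a := j a - y, Suc N := y)) i))
       = ((b a + c a) choose (j a - y)) * (\<Prod>i\<in>{..N}-{a}. (b i + c i) choose ((j(a := j a - y, Suc N := y)) i))"
      using aN by (subst prod.remove[of _ a]) auto
    also have "(\<Prod>i\<in>{..N}-{a}. (b i + c i) choose ((j(a := j a - y, Suc N := y)) i)) = R"
      unfolding R_def by (rule prod.cong) auto
    finally show "((b a + c a) choose (j a - y)) * (b (Suc N) choose y) * R =
      (\<Prod>i\<in>{1..Suc N}. (b i + c i) choose ((j(a := j a - y, Suc N := y)) i))" by simp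
  qed
  finally show ?thesis .
qed



lemma step1:
  assumes ok: "okg N G" and inc: "\<forall>i\<in>{2..N+1}. 1 \<le> indeg G i" and N1: "1 \<le> N"
    and p: "p < length G" "snd (G!p) = Suc N" and two: "2 \<le> indeg G (Suc N)"
    and IH: "\<And>b. kostant N (del p G) (LV N b) =
       (\<Sum>j\<in>W0 N (length (del p G) - N). Pf N (del p G) b j * Tf N (del p G) j)"
  shows "kostant N G (LV N b) = (\<Sum>j\<in>W0 N (length G - N). Pf N G b j * Tf N G j)"
proof -
  define s where "s = fst (G!p)"
  have Gp: "G!p = (s, Suc N)" using p s_def by (cases "G!p") auto
  have s1: "1 \<le> s" "s < Suc N" using ok p Gp unfolding okg_def by force+
  define a where "a = s - 1"
  have sa: "s = Suc a" and aN: "a < N" using s1 a_def by auto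
  define G0 where "G0 = del p G"
  have ok0: "okg N G0" using okg_del[OF ok p(1)] G0_def by simp
  have len0: "length G0 = length G - 1" using del_len[OF p(1)] G0_def by simp
  have ind0: "\<And>k. indeg G0 k = indeg G k - (if k = Suc N then 1 else 0)"
    using indeg_del[OF p(1)] p(2) G0_def by auto
  have CC0: "CC G0 = (CC G)(N := CC G N - 1)" by (rule ext) (simp add: CC_def ind0)
  have mN: "N + 1 \<le> length G"
  proof -
    have "(\<Sum>k\<in>{2..Suc N}. indeg G k) \<le> length G" by (rule indeg_sum_le) simp
    moreover have "(\<Sum>k\<in>{2..Suc N}. indeg G k) = (\<Sum>k\<in>{2..N}. indeg G k) + indeg G (Suc N)"
      using N1 by (simp add: sum.cl_ivl_Suc)
    moreover have "(\<Sum>k\<in>{2..N}. (1::nat)) \<le> (\<Sum>k\<in>{2..N}. indeg G k)"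
      using inc by (intro sum_mono) auto
    moreover have "(\<Sum>k\<in>{2..N}. (1::nat)) = N - 1" by simp
    ultimately show ?thesis using two by linarith
  qed
  define S where "S = length G - N"
  have S1: "1 \<le> S" using mN S_def by simp
  have S0: "length G0 - N = S - 1" using len0 S_def by simp
  define bx where "bx x = b(N := b N - x, a := b a + x)" for x
  have LVN: "LV N b (Suc N) = - int (b N)" using N1 by (simp add: LV_def)
  have L1: "kostant N G (LV N b) = (\<Sum>x\<le>b N. kostant N G0
      (\<lambda>k. LV N b k - (if k = s then int x else 0) + (if k = Suc N then int x else 0)))"
    unfolding G0_def
  proof (rule kostant_del[OF ok p(1) Gp])
    show "finite {..b N}" by simp
    fix f assume "f \<in> flows N G (LV N b)"
    then have "netflow G f (Suc N) = LV N b (Suc N)" by (auto simp: flows_def)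
    then have "int (f p) \<le> int (b N)" using flow_le_last[OF ok p, of f] LVN by simp
    then show "f p \<in> {..b N}" by simp
  qed
  have L2: "kostant N G0 (\<lambda>k. LV N b k - (if k = s then int x else 0) + (if k = Suc N then int x else 0))
      = kostant N G0 (LV N (bx x))" if x: "x \<le> b N" for x
  proof (rule kostant_cong)
    fix k assume k: "k \<in> {1..Suc N}"
    show "LV N b k - (if k = s then int x else 0) + (if k = Suc N then int x else 0) = LV N (bx x) k"
    proof (cases "k = 1")
      case True
      define T where "T = {1..N}"
      have e1: "sum (b(N := b N - x)) T + b N = sum b T + (b N - x)"
        unfolding T_def by (rule sum_upd) (use N1 in auto)
      have e2: "sum (bx x) T + b a = sum (b(N := b N - x)) T + (b a + x)" if "a \<in> T"
      proof -
        have "sum (bx x) T + (b(N := b N - x)) a = sum (b(N := b N - x)) T + (b a + x)"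
          unfolding bx_def by (rule sum_upd) (use that T_def in auto)
        then show ?thesis using aN by simp
      qed
      have e3: "sum (bx x) T = sum (b(N := b N - x)) T" if "a \<notin> T"
        unfolding bx_def by (rule sum.cong) (use that in auto)
      have aT: "a \<in> T \<longleftrightarrow> s \<noteq> 1" using aN sa T_def by auto
      have h: "sum (bx x) T + (if s = 1 then x else 0) = sum b T"
      proof (cases "s = 1")
        case True
        then show ?thesis using e1 e3 aT x by simp
      next
        case False
        then show ?thesis using e1 e2 aT x by simp
      qed
      have "int (sum (bx x) T) = int (sum b T) - (if s = 1 then int x else 0)"
      proof -
        define A where "A = sum (bx x) T"
        define B where "B = sum b T"
        have "A + (if s = 1 then x else 0) = B" using h A_def B_def by simp
        then have "int A + (if s = 1 then int x else 0) = int B" by (cases "s = 1") auto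
        then show ?thesis using A_def B_def by simp
      qed
      then show ?thesis using True N1 unfolding LV_def T_def by auto
    next
      case False
      then have k2: "k - 1 \<noteq> 0" "k = Suc (k - 1)" using k by auto
      have "k - 1 = a \<longleftrightarrow> k = s" using k2 sa by auto
      moreover have "k - 1 = N \<longleftrightarrow> k = Suc N" using k2 by auto
      ultimately show ?thesis using False x aN s1 unfolding LV_def bx_def by auto
    qed
  qed
  have L3: "kostant N G (LV N b) = (\<Sum>j\<in>W0 N (S - 1). Tf N G0 j * (\<Sum>x\<le>b N. Pf N G0 (bx x) j))"
  proof -
    have "kostant N G (LV N b) = (\<Sum>x\<le>b N. kostant N G0 (LV N (bx x)))"
      unfolding L1 by (rule sum.cong) (auto simp: L2)
    also have "\<dots> = (\<Sum>x\<le>b N. \<Sum>j\<in>W0 N (S - 1). Pf N G0 (bx x) j * Tf N G0 j)"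
      using IH S0 G0_def by simp
    also have "\<dots> = (\<Sum>j\<in>W0 N (S - 1). Tf N G0 j * (\<Sum>x\<le>b N. Pf N G0 (bx x) j))"
      by (subst sum.swap) (simp add: sum_distrib_left mult.commute)
    finally show ?thesis .
  qed
  define Jy where "Jy J y = J(a := J a + y, N := J N - Suc y)" for J :: "nat \<Rightarrow> nat" and y
  define Ji where "Ji j y = j(a := j a - y, N := j N + Suc y)" for j :: "nat \<Rightarrow> nat" and y
  have R1: "Tf N G J = (\<Sum>y\<in>{..<J N}. Tf N G0 (Jy J y))" for J
  proof -
    have "Tf N G J = (\<Sum>y\<in>{..<J N}. kostant N G0 (\<lambda>k. int (indeg G k - 1) - int (J (k - 1))
        - (if k = s then int y else 0) + (if k = Suc N then int y else 0)))"
      unfolding Tf_def G0_def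
    proof (rule kostant_del[OF ok p(1) Gp])
      show "finite {..<J N}" by simp
      fix f assume "f \<in> flows N G (\<lambda>k. int (indeg G k - 1) - int (J (k - 1)))"
      then have "netflow G f (Suc N) = int (indeg G (Suc N) - 1) - int (J N)" by (auto simp: flows_def)
      then have "int (f p) \<le> int (J N) - int (indeg G (Suc N) - 1)" using flow_le_last[OF ok p, of f] by simp
      then show "f p \<in> {..<J N}" using two by simp
    qed
    also have "\<dots> = (\<Sum>y\<in>{..<J N}. Tf N G0 (Jy J y))"
    proof (rule sum.cong[OF refl])
      fix y assume "y \<in> {..<J N}"
      then have y: "y < J N" by simp
      show "kostant N G0 (\<lambda>k. int (indeg G k - 1) - int (J (k - 1))
        - (if k = s then int y else 0) + (if k = Suc N then int y else 0)) = Tf N G0 (Jy J y)"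
        unfolding Tf_def
      proof (rule kostant_cong)
        fix k assume k: "k \<in> {1..Suc N}"
        then have k1: "k = Suc (k - 1)" by auto
        have ka: "k - 1 = a \<longleftrightarrow> k = s" using k1 sa by auto
        have kN: "k - 1 = N \<longleftrightarrow> k = Suc N" using k1 by auto
        show "int (indeg G k - 1) - int (J (k - 1)) - (if k = s then int y else 0) + (if k = Suc N then int y else 0)
          = int (indeg G0 k - 1) - int (Jy J y (k - 1))"
          using ka kN y two aN s1 unfolding Jy_def ind0 by auto
      qed
    qed
    finally show ?thesis .
  qed
  have F1: "Jy J y \<in> W0 N (S - 1) \<and> y \<le> Jy J y a" if J: "J \<in> W0 N S" and y: "y < J N" for J y
  proof -
    have "(\<Sum>i\<le>N. Jy J y i) + J a + J N = (\<Sum>i\<le>N. J i) + (J a + y) + (J N - Suc y)"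
      unfolding Jy_def by (rule sum_upd2[OF aN])
    then have "(\<Sum>i\<le>N. Jy J y i) = S - 1" using J y by (simp add: W0_def)
    then show ?thesis using J aN by (auto simp: W0_def Jy_def)
  qed
  have F2: "Ji j y \<in> W0 N S \<and> y < Ji j y N" if j: "j \<in> W0 N (S - 1)" and y: "y \<le> j a" for j y
  proof -
    have "(\<Sum>i\<le>N. Ji j y i) + j a + j N = (\<Sum>i\<le>N. j i) + (j a - y) + (j N + Suc y)"
      unfolding Ji_def by (rule sum_upd2[OF aN])
    then have "(\<Sum>i\<le>N. Ji j y i) = S" using j y S1 by (simp add: W0_def)
    then show ?thesis using j aN by (auto simp: W0_def Ji_def)
  qed
  have F3: "Ji (Jy J y) y = J" if "y < J N" for J y
    using that aN unfolding Ji_def Jy_def by (auto simp: fun_eq_iff)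
  have F4: "Jy (Ji j y) y = j" if "y \<le> j a" for j y
    using that aN unfolding Ji_def Jy_def by (auto simp: fun_eq_iff)
  have "(\<Sum>J\<in>W0 N S. Pf N G b J * Tf N G J) = (\<Sum>J\<in>W0 N S. \<Sum>y\<in>{..<J N}. Pf N G b J * Tf N G0 (Jy J y))"
    unfolding R1 sum_distrib_left ..
  also have "\<dots> = (\<Sum>(J, y)\<in>Sigma (W0 N S) (\<lambda>J. {..<J N}). Pf N G b J * Tf N G0 (Jy J y))"
    by (rule sum.Sigma) (auto simp: W0_finite)
  also have "\<dots> = (\<Sum>(j, y)\<in>Sigma (W0 N (S - 1)) (\<lambda>j. {..j a}). Pf N G b (Ji j y) * Tf N G0 j)"
    by (rule sum.reindex_bij_witness[where i = "\<lambda>(j, y). (Ji j y, y)" and j = "\<lambda>(J, y). (Jy J y, y)"])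
       (auto simp: F1[simplified] F2[simplified] F3 F4)
  also have "\<dots> = (\<Sum>j\<in>W0 N (S - 1). \<Sum>y\<le>j a. Pf N G b (Ji j y) * Tf N G0 j)"
    by (rule sum.Sigma[symmetric]) (auto simp: W0_finite)
  also have "\<dots> = (\<Sum>j\<in>W0 N (S - 1). Tf N G0 j * (\<Sum>y\<le>j a. Pf N G b (Ji j y)))"
    by (simp add: sum_distrib_left mult.commute)
  also have "\<dots> = (\<Sum>j\<in>W0 N (S - 1). Tf N G0 j * (\<Sum>x\<le>b N. Pf N G0 (bx x) j))"
  proof (rule sum.cong[OF refl])
    fix j assume "j \<in> W0 N (S - 1)"
    show "Tf N G0 j * (\<Sum>y\<le>j a. Pf N G b (Ji j y)) = Tf N G0 j * (\<Sum>x\<le>b N. Pf N G0 (bx x) j)"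
    proof (cases "0 < j 0 \<or> j N < CC G0 N")
      case True
      then have "Tf N G0 j = 0" using Tf_zero0[OF ok0] Tf_zeroN[OF ok0] by blast
      then show ?thesis by simp
    next
      case False
      have c1: "1 \<le> CC G N" using two by (simp add: CC_def)
      have "(\<Sum>x\<le>b N. Pf N G0 (bx x) j) = (\<Sum>y\<le>j a. Pf N G b (Ji j y))"
        unfolding Pf_def CC0 bx_def Ji_def
        by (rule ident1[OF aN]) (use False CC0 c1 in auto)
      then show ?thesis by simp
    qed
  qed
  finally show ?thesis using L3 S_def by simp
qed


lemma step2:
  assumes ok: "okg N G" and NN: "N = Suc N'"
    and p: "p < length G" "snd (G!p) = Suc N" and one: "indeg G (Suc N) = 1"
    and IH: "\<And>b. kostant N' (del p G) (LV N' b) =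
       (\<Sum>j\<in>W0 N' (length (del p G) - N'). Pf N' (del p G) b j * Tf N' (del p G) j)"
  shows "kostant N G (LV N b) = (\<Sum>j\<in>W0 N (length G - N). Pf N G b j * Tf N G j)"
proof -
  define s where "s = fst (G!p)"
  have Gp: "G!p = (s, Suc N)" using p s_def by (cases "G!p") auto
  have s1: "1 \<le> s" "s < Suc N" using ok p Gp unfolding okg_def by force+
  define a where "a = s - 1"
  have sa: "s = Suc a" and aN: "a < N" using s1 a_def by auto
  define G0 where "G0 = del p G"
  have ok0: "okg N G0" using okg_del[OF ok p(1)] G0_def by simp
  have len0: "length G0 = length G - 1" using del_len[OF p(1)] G0_def by simp
  have ind0: "\<And>k. indeg G0 k = indeg G k - (if k = Suc N then 1 else 0)"
    using indeg_del[OF p(1)] p(2) G0_def by auto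
  have ind0N: "indeg G0 (Suc N) = 0" using ind0 one by simp
  have ok0': "okg N' G0"
    using ok0 ind0N unfolding okg_def indeg_0_iff NN by (metis le_Suc_eq)
  have CC0: "CC G0 i = CC G i" if "i < N" for i using that by (simp add: CC_def ind0)
  have CCN: "CC G N = 0" using one by (simp add: CC_def)
  define S where "S = length G - N"
  have S0: "length G0 - N' = S" using len0 S_def NN by simp
  define b' where "b' = b(a := b a + b N)"
  have LVN: "LV N b (Suc N) = - int (b N)" using NN by (simp add: LV_def)
  have L1: "kostant N G (LV N b) = (\<Sum>x\<le>b N. kostant N G0
      (\<lambda>k. LV N b k - (if k = s then int x else 0) + (if k = Suc N then int x else 0)))"
    unfolding G0_def
  proof (rule kostant_del[OF ok p(1) Gp])
    show "finite {..b N}" by simp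
    fix f assume "f \<in> flows N G (LV N b)"
    then have "netflow G f (Suc N) = LV N b (Suc N)" by (auto simp: flows_def)
    then have "int (f p) \<le> int (b N)" using flow_le_last[OF ok p, of f] LVN by simp
    then show "f p \<in> {..b N}" by simp
  qed
  also have "\<dots> = (\<Sum>x\<le>b N. if x = b N then kostant N' G0
      (\<lambda>k. LV N b k - (if k = s then int x else 0) + (if k = Suc N then int x else 0)) else 0)"
  proof (rule sum.cong[OF refl])
    fix x
    show "kostant N G0 (\<lambda>k. LV N b k - (if k = s then int x else 0) + (if k = Suc N then int x else 0))
      = (if x = b N then kostant N' G0
      (\<lambda>k. LV N b k - (if k = s then int x else 0) + (if k = Suc N then int x else 0)) else 0)"
      unfolding NN kostant_drop_vertex[OF ok0'] using s1 LVN NN by auto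
  qed
  also have "\<dots> = kostant N' G0 (\<lambda>k. LV N b k - (if k = s then int (b N) else 0) + (if k = Suc N then int (b N) else 0))"
    by (simp add: sum.delta')
  also have "\<dots> = kostant N' G0 (LV N' b')"
  proof (rule kostant_cong)
    fix k assume k: "k \<in> {1..Suc N'}"
    show "LV N b k - (if k = s then int (b N) else 0) + (if k = Suc N then int (b N) else 0) = LV N' b' k"
    proof (cases "k = 1")
      case True
      define T where "T = {1..N'}"
      have e0: "sum b {1..N} = sum b T + b N" unfolding T_def NN by (simp add: sum.cl_ivl_Suc)
      have e2: "sum b' T + b a = sum b T + (b a + b N)" if "a \<in> T"
        unfolding b'_def by (rule sum_upd) (use that T_def in auto)
      have e3: "sum b' T = sum b T" if "a \<notin> T"
        unfolding b'_def by (rule sum.cong) (use that in auto)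
      have aT: "a \<in> T \<longleftrightarrow> s \<noteq> 1" using aN sa T_def NN by auto
      have h: "sum b' T + (if s = 1 then b N else 0) = sum b {1..N}"
        using e0 e2 e3 aT by (cases "s = 1") auto
      have "int (sum b' T) = int (sum b {1..N}) - (if s = 1 then int (b N) else 0)"
      proof -
        define A where "A = sum b' T"
        define B where "B = sum b {1..N}"
        have "A + (if s = 1 then b N else 0) = B" using h A_def B_def by simp
        then have "int A + (if s = 1 then int (b N) else 0) = int B" by (cases "s = 1") auto
        then show ?thesis using A_def B_def by simp
      qed
      then show ?thesis using True NN unfolding LV_def T_def by auto
    next
      case False
      then have k2: "k - 1 \<noteq> 0" "k = Suc (k - 1)" using k by auto
      have "k - 1 = a \<longleftrightarrow> k = s" using k2 sa by auto
      moreover have "k \<noteq> Suc N" using k NN by auto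
      ultimately show ?thesis using False aN s1 unfolding LV_def b'_def by auto
    qed
  qed
  also have "\<dots> = (\<Sum>j\<in>W0 N' S. Pf N' G0 b' j * Tf N' G0 j)"
    using IH S0 G0_def by simp
  finally have L: "kostant N G (LV N b) = (\<Sum>j\<in>W0 N' S. Pf N' G0 b' j * Tf N' G0 j)" .
  define phi where "phi J = J(a := J a + J N, N := 0)" for J :: "nat \<Rightarrow> nat"
  define psi where "psi j y = j(a := j a - y, N := y)" for j :: "nat \<Rightarrow> nat" and y
  have R1: "Tf N G J = Tf N' G0 (phi J)" for J
  proof -
    have "Tf N G J = (\<Sum>x\<le>J N. kostant N G0 (\<lambda>k. int (indeg G k - 1) - int (J (k - 1))
        - (if k = s then int x else 0) + (if k = Suc N then int x else 0)))"
      unfolding Tf_def G0_def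
    proof (rule kostant_del[OF ok p(1) Gp])
      show "finite {..J N}" by simp
      fix f assume "f \<in> flows N G (\<lambda>k. int (indeg G k - 1) - int (J (k - 1)))"
      then have "netflow G f (Suc N) = int (indeg G (Suc N) - 1) - int (J N)" by (auto simp: flows_def)
      then have "int (f p) \<le> int (J N)" using flow_le_last[OF ok p, of f] one by simp
      then show "f p \<in> {..J N}" by simp
    qed
    also have "\<dots> = (\<Sum>x\<le>J N. if x = J N then kostant N' G0 (\<lambda>k. int (indeg G k - 1) - int (J (k - 1))
        - (if k = s then int x else 0) + (if k = Suc N then int x else 0)) else 0)"
    proof (rule sum.cong[OF refl])
      fix x
      show "kostant N G0 (\<lambda>k. int (indeg G k - 1) - int (J (k - 1))
        - (if k = s then int x else 0) + (if k = Suc N then int x else 0)) =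
        (if x = J N then kostant N' G0 (\<lambda>k. int (indeg G k - 1) - int (J (k - 1))
        - (if k = s then int x else 0) + (if k = Suc N then int x else 0)) else 0)"
        unfolding NN kostant_drop_vertex[OF ok0'] using s1 one NN by auto
    qed
    also have "\<dots> = kostant N' G0 (\<lambda>k. int (indeg G k - 1) - int (J (k - 1))
        - (if k = s then int (J N) else 0) + (if k = Suc N then int (J N) else 0))"
      by (simp add: sum.delta')
    also have "\<dots> = Tf N' G0 (phi J)"
      unfolding Tf_def
    proof (rule kostant_cong)
      fix k assume k: "k \<in> {1..Suc N'}"
      then have k1: "k = Suc (k - 1)" by auto
      have ka: "k - 1 = a \<longleftrightarrow> k = s" using k1 sa by auto
      have kN: "k - 1 \<noteq> N" "k \<noteq> Suc N" using k NN by auto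
      show "int (indeg G k - 1) - int (J (k - 1)) - (if k = s then int (J N) else 0) + (if k = Suc N then int (J N) else 0)
          = int (indeg G0 k - 1) - int (phi J (k - 1))"
        using ka kN aN unfolding phi_def ind0 by auto
    qed
    finally show ?thesis .
  qed
  have G1: "phi J \<in> W0 N' S \<and> J N \<le> phi J a" if J: "J \<in> W0 N S" for J
  proof -
    have "(\<Sum>i\<le>N. phi J i) + J a + J N = (\<Sum>i\<le>N. J i) + (J a + J N) + 0"
      unfolding phi_def by (rule sum_upd2[OF aN])
    moreover have "(\<Sum>i\<le>N. phi J i) = (\<Sum>i\<le>N'. phi J i)" unfolding NN phi_def by simp
    ultimately have "(\<Sum>i\<le>N'. phi J i) = S" using J by (simp add: W0_def)
    then show ?thesis using J aN NN by (auto simp: W0_def phi_def)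
  qed
  have G2: "psi j y \<in> W0 N S" if j: "j \<in> W0 N' S" and y: "y \<le> j a" for j y
  proof -
    have "(\<Sum>i\<le>N. psi j y i) + j a + j N = (\<Sum>i\<le>N. j i) + (j a - y) + y"
      unfolding psi_def by (rule sum_upd2[OF aN])
    moreover have "j N = 0" using j NN by (simp add: W0_def)
    moreover have "(\<Sum>i\<le>N. j i) = (\<Sum>i\<le>N'. j i) + j N" unfolding NN by simp
    ultimately have "(\<Sum>i\<le>N. psi j y i) = S" using j y by (simp add: W0_def)
    then show ?thesis using j aN NN by (auto simp: W0_def psi_def)
  qed
  have G3: "psi (phi J) (J N) = J" for J
    using aN unfolding phi_def psi_def by (auto simp: fun_eq_iff)
  have G4: "phi (psi j y) = j \<and> psi j y N = y" if "y \<le> j a" "j \<in> W0 N' S" for j y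
  proof -
    have "j N = 0" using that NN by (simp add: W0_def)
    then show ?thesis using that aN unfolding phi_def psi_def by (auto simp: fun_eq_iff)
  qed
  have "(\<Sum>J\<in>W0 N S. Pf N G b J * Tf N G J) = (\<Sum>J\<in>W0 N S. Pf N G b J * Tf N' G0 (phi J))"
    unfolding R1 ..
  also have "\<dots> = (\<Sum>(j, y)\<in>Sigma (W0 N' S) (\<lambda>j. {..j a}). Pf N G b (psi j y) * Tf N' G0 j)"
    by (rule sum.reindex_bij_witness[where i = "\<lambda>(j, y). psi j y" and j = "\<lambda>J. (phi J, J N)"])
       (auto simp: G1 G2 G3 G4)
  also have "\<dots> = (\<Sum>j\<in>W0 N' S. \<Sum>y\<le>j a. Pf N G b (psi j y) * Tf N' G0 j)"
    by (rule sum.Sigma[symmetric]) (auto simp: W0_finite)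
  also have "\<dots> = (\<Sum>j\<in>W0 N' S. Tf N' G0 j * (\<Sum>y\<le>j a. Pf N G b (psi j y)))"
    by (simp add: sum_distrib_left mult.commute)
  also have "\<dots> = (\<Sum>j\<in>W0 N' S. Pf N' G0 b' j * Tf N' G0 j)"
  proof (rule sum.cong[OF refl])
    fix j assume "j \<in> W0 N' S"
    show "Tf N' G0 j * (\<Sum>y\<le>j a. Pf N G b (psi j y)) = Pf N' G0 b' j * Tf N' G0 j"
    proof (cases "0 < j 0")
      case True
      then have "Tf N' G0 j = 0" using Tf_zero0[OF ok0'] by blast
      then show ?thesis by simp
    next
      case False
      have "Pf N' G0 b' j = (\<Prod>i\<in>{1..N'}. ((b(a := b a + b (Suc N'))) i + CC G i) choose j i)"
        unfolding Pf_def b'_def NN using CC0 NN by (intro prod.cong) auto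
      also have "\<dots> = (\<Sum>y\<le>j a. \<Prod>i\<in>{1..Suc N'}. (b i + CC G i) choose ((j(a := j a - y, Suc N' := y)) i))"
        by (rule ident2) (use aN NN False CCN in auto)
      also have "\<dots> = (\<Sum>y\<le>j a. Pf N G b (psi j y))"
        unfolding Pf_def psi_def NN ..
      finally show ?thesis by simp
    qed
  qed
  finally show ?thesis using L S_def by simp
qed



lemma kostant_base: "kostant 0 [] v = (if v 1 = 0 then 1 else 0)"
proof -
  have "flows 0 [] v = (if v 1 = 0 then {\<lambda>_. 0} else {})"
    unfolding flows_def netflow_def by (auto simp: fun_eq_iff)
  then show ?thesis by (simp add: kostant_flows)
qed

lemma main:
  "okg n G \<Longrightarrow> \<forall>i\<in>{2..n+1}. 1 \<le> indeg G i \<Longrightarrow>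
   kostant n G (LV n b) = (\<Sum>j\<in>W0 n (length G - n). Pf n G b j * Tf n G j)"
proof (induction "length G" arbitrary: n G b rule: less_induct)
  case less
  show ?case
  proof (cases n)
    case 0
    have G: "G = []"
    proof (rule ccontr)
      assume "G \<noteq> []"
      then have "0 < length G" by simp
      then show False using less.prems(1) 0 unfolding okg_def by fastforce
    qed
    have W: "W0 0 0 = {\<lambda>_. 0}" unfolding W0_def by (auto simp: fun_eq_iff) (metis neq0_conv)
    show ?thesis using 0 G W by (simp add: kostant_base LV_def Pf_def Tf_def indeg_def)
  next
    case (Suc N')
    have "1 \<le> indeg G (Suc n)" using less.prems(2) Suc by auto
    then obtain p where p: "p < length G" "snd (G!p) = Suc n" using indeg_pos by blast
    have ind0: "\<And>k. indeg (del p G) k = indeg G k - (if k = Suc n then 1 else 0)"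
      using indeg_del[OF p(1)] p(2) by auto
    have lt: "length (del p G) < length G" using del_len[OF p(1)] p(1) by simp
    have okd: "okg n (del p G)" by (rule okg_del[OF less.prems(1) p(1)])
    show ?thesis
    proof (cases "indeg G (Suc n) = 1")
      case True
      have ind0N: "indeg (del p G) (Suc n) = 0" using ind0 True by simp
      have ok': "okg N' (del p G)"
        using okd ind0N unfolding okg_def indeg_0_iff Suc by (metis le_Suc_eq)
      have inc': "\<forall>i\<in>{2..N'+1}. 1 \<le> indeg (del p G) i"
        using less.prems(2) Suc by (auto simp: ind0)
      show ?thesis
        by (rule step2[OF less.prems(1) Suc p True])
           (rule less.hyps[OF lt ok' inc'])
    next
      case False
      have two: "2 \<le> indeg G (Suc n)" using False \<open>1 \<le> indeg G (Suc n)\<close> by simp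
      have inc': "\<forall>i\<in>{2..n+1}. 1 \<le> indeg (del p G) i"
        using less.prems(2) two by (auto simp: ind0)
      show ?thesis
        by (rule step1[OF less.prems(1,2) _ p two]) (use Suc in simp, rule less.hyps[OF lt okd inc'])
    qed
  qed
qed


theorem corollary5p7:
  fixes n :: nat and G :: mgraph and b :: "nat \<Rightarrow> nat"
  assumes edges: "\<forall>(i, j)\<in>set G. 1 \<le> i \<and> i < j \<and> j \<le> n + 1"
    and conn: "connected_mgraph n G"
    and incoming: "\<forall>i\<in>{2..n+1}. indeg G i \<ge> 1"
  shows "kostant n G (\<lambda>k. if k = 1 then int (\<Sum>i=1..n. b i) else - int (b (k - 1)))
       = (\<Sum>j\<in>dom_below n (length G - n) (\<lambda>i. indeg G (i + 1) - 1).
            (\<Prod>i=1..n. (b i + (indeg G (i + 1) - 1)) choose (j i))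
            * kostant n G (\<lambda>k. if k = 1 then 0
                               else int (indeg G k - 1) - int (j (k - 1))))"
proof -
  have ok: "okg n G"
    unfolding okg_def
  proof (intro allI impI)
    fix e assume "e < length G"
    then have m: "G!e \<in> set G" by simp
    obtain u w where uw: "G!e = (u, w)" by (cases "G!e")
    have "1 \<le> u \<and> u < w \<and> w \<le> n + 1" using edges m uw by auto
    then show "1 \<le> fst (G!e) \<and> fst (G!e) < snd (G!e) \<and> snd (G!e) \<le> Suc n"
      using uw by simp
  qed
  have inc: "\<forall>i\<in>{2..n+1}. 1 \<le> indeg G i" using incoming by simp
  define S where "S = length G - n"
  have sum0: "(\<Sum>i\<le>n. j i) = (\<Sum>i\<in>{1..n}. j i)" if "j 0 = 0" for j :: "nat \<Rightarrow> nat"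
  proof -
    have "{..n} = insert 0 {1..n}" by (rule set_eqI, simp, arith)
    then show ?thesis using that by simp
  qed
  have sub: "dom_below n S (\<lambda>i. indeg G (i + 1) - 1) \<subseteq> W0 n S"
  proof
    fix j assume j: "j \<in> dom_below n S (\<lambda>i. indeg G (i + 1) - 1)"
    then have "j 0 = 0" by (simp add: dom_below_def)
    then show "j \<in> W0 n S" using j sum0[of j] by (auto simp: dom_below_def W0_def)
  qed
  have zero: "Tf n G j = 0" if j: "j \<in> W0 n S - dom_below n S (\<lambda>i. indeg G (i + 1) - 1)" for j
  proof (cases "j 0 = 0")
    case False
    then show ?thesis using Tf_zero0[OF ok] by simp
  next
    case True
    have supp: "\<forall>i. i \<notin> {1..n} \<longrightarrow> j i = 0"
    proof (intro allI impI)
      fix i assume "i \<notin> {1..n}"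
      then have "i = 0 \<or> n < i" by auto
      then show "j i = 0" using j True by (auto simp: W0_def)
    qed
    have sm: "(\<Sum>i=1..n. j i) = S" using j True sum0[of j] by (simp add: W0_def)
    have "\<not> (\<forall>l\<in>{1..n}. (\<Sum>i=1..l. j i) \<le> (\<Sum>i=1..l. indeg G (i + 1) - 1))"
    proof
      assume "\<forall>l\<in>{1..n}. (\<Sum>i=1..l. j i) \<le> (\<Sum>i=1..l. indeg G (i + 1) - 1)"
      then have "j \<in> dom_below n S (\<lambda>i. indeg G (i + 1) - 1)"
        unfolding dom_below_def using supp sm by blast
      then show False using j by blast
    qed
    then obtain l where l: "l \<in> {1..n}" and lt: "(\<Sum>i=1..l. indeg G (i + 1) - 1) < (\<Sum>i=1..l. j i)"
      by (auto simp: not_le)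
    show ?thesis
      unfolding Tf_def
    proof (rule kostant_zero_seg[OF ok, where L = "Suc l"])
      show "Suc l \<le> Suc n" using l by simp
      have "(\<Sum>k\<in>{1..Suc l}. int (indeg G k - 1) - int (j (k - 1)))
         = (\<Sum>i\<in>{0..l}. int (indeg G (Suc i) - 1) - int (j i))"
        using sum.shift_bounds_cl_Suc_ivl[of "\<lambda>k. int (indeg G k - 1) - int (j (k - 1))" 0 l] by simp
      also have "\<dots> = (int (indeg G 1 - 1) - int (j 0)) + (\<Sum>i\<in>{1..l}. int (indeg G (Suc i) - 1) - int (j i))"
        by (simp add: sum.atLeast_Suc_atMost)
      also have "\<dots> = int (\<Sum>i=1..l. indeg G (i + 1) - 1) - int (\<Sum>i=1..l. j i)"
        using True indeg_1[OF ok] by (simp add: sum_subtractf)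
      also have "\<dots> < 0" by (simp only: diff_less_0_iff_less of_nat_less_iff lt)
      finally show "(\<Sum>k\<in>{1..Suc l}. int (indeg G k - 1) - int (j (k - 1))) < 0" .
    qed
  qed
  have "kostant n G (\<lambda>k. if k = 1 then int (\<Sum>i=1..n. b i) else - int (b (k - 1))) = kostant n G (LV n b)"
    by (simp add: LV_def)
  also have "\<dots> = (\<Sum>j\<in>W0 n S. Pf n G b j * Tf n G j)"
    using main[OF ok inc] S_def by simp
  also have "\<dots> = (\<Sum>j\<in>dom_below n S (\<lambda>i. indeg G (i + 1) - 1).
            (\<Prod>i=1..n. (b i + (indeg G (i + 1) - 1)) choose (j i))
            * kostant n G (\<lambda>k. if k = 1 then 0
                               else int (indeg G k - 1) - int (j (k - 1))))"
  proof (rule sum.mono_neutral_cong_right[OF W0_finite sub])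
    show "\<forall>j\<in>W0 n S - dom_below n S (\<lambda>i. indeg G (i + 1) - 1). Pf n G b j * Tf n G j = 0"
      using zero by simp
  next
    fix j assume j: "j \<in> dom_below n S (\<lambda>i. indeg G (i + 1) - 1)"
    then have j0: "j 0 = 0" by (simp add: dom_below_def)
    have "Tf n G j = kostant n G (\<lambda>k. if k = 1 then 0 else int (indeg G k - 1) - int (j (k - 1)))"
      unfolding Tf_def by (rule kostant_cong) (use j0 indeg_1[OF ok] in auto)
    then show "Pf n G b j * Tf n G j = (\<Prod>i=1..n. (b i + (indeg G (i + 1) - 1)) choose (j i))
            * kostant n G (\<lambda>k. if k = 1 then 0
                               else int (indeg G k - 1) - int (j (k - 1)))"
      by (simp add: Pf_def CC_def)
  qed
  finally show ?thesis using S_def by simp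
qed


end
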